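(* For every $n\ge1$, the Möbius function of the priority lattice $\Pi(n)$ satisfies $\mu(\hat0,\hat1)=0$.
   Context: $[n]_0=\{0,\dots,n\}$. A priority forest on $[n]_0$ is a rooted forest with vertex set $[n]_0$ whose component trees $T_0,T_1,\dots$ are increasing (each non-root vertex has a larger label than its parent) and satisfy: for $j<k$ every label of $T_j$ is smaller than every label of $T_k$. The priority lattice $\Pi(n)$ is the set of priority forests on $[n]_0$ ordered by inclusion of edge sets, together with an extra element $\hat1$ declared greater than every priority forest; $\hat0$ is the edgeless forest. *)

theory Defs
  imports Main
begin

text \<open>A rooted forest on the vertex set [n]_0 = {0..n} is encoded by its set of
  directed edges (parent, child).\<close>

definition vertices :: "nat \<Rightarrow> nat set" where
  "vertices n = {0..n}"

definition comp :: "nat \<Rightarrow> (nat \<times> nat) set \<Rightarrow> nat \<Rightarrow> nat set" where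
  "comp n F x = {y \<in> vertices n. (x, y) \<in> (F \<union> F\<inverse>)\<^sup>*}"

definition priority_forest :: "nat \<Rightarrow> (nat \<times> nat) set \<Rightarrow> bool" where
  "priority_forest n F \<longleftrightarrow>
     F \<subseteq> vertices n \<times> vertices n \<and>
     (\<forall>(p, c) \<in> F. p < c) \<and>
     (\<forall>p p' c. (p, c) \<in> F \<and> (p', c) \<in> F \<longrightarrow> p = p') \<and>
     (\<forall>x \<in> vertices n. \<forall>y \<in> vertices n. comp n F x \<noteq> comp n F y \<longrightarrow>
        (\<forall>a \<in> comp n F x. \<forall>b \<in> comp n F y. a < b) \<or>
        (\<forall>a \<in> comp n F x. \<forall>b \<in> comp n F y. b < a))"

definition priority_lattice :: "nat \<Rightarrow> (nat \<times> nat) set option set" where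
  "priority_lattice n = Some ` {F. priority_forest n F} \<union> {None}"

definition priority_le :: "(nat \<times> nat) set option \<Rightarrow> (nat \<times> nat) set option \<Rightarrow> bool" where
  "priority_le x y \<longleftrightarrow> y = None \<or> (\<exists>A B. x = Some A \<and> y = Some B \<and> A \<subseteq> B)"

definition mobius :: "'a set \<Rightarrow> ('a \<Rightarrow> 'a \<Rightarrow> bool) \<Rightarrow> 'a \<Rightarrow> 'a \<Rightarrow> int" where
  "mobius P le = (THE m.
     (\<forall>x \<in> P. \<forall>y \<in> P. m x y =
        (if x = y then 1
         else if le x y then - (\<Sum>z \<in> {z \<in> P. le x z \<and> le z y \<and> z \<noteq> y}. m x z)
         else 0)) \<and>
     (\<forall>x y. x \<notin> P \<or> y \<notin> P \<longrightarrow> m x y = 0))"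

end

theory Submission
  imports Defs
begin


function mob :: "('a \<Rightarrow> nat) \<Rightarrow> 'a set \<Rightarrow> ('a \<Rightarrow> 'a \<Rightarrow> bool) \<Rightarrow> 'a \<Rightarrow> 'a \<Rightarrow> int" where
 "mob r P le x y = (if x \<in> P \<and> y \<in> P then (if x = y then 1 else if le x y then
    - (\<Sum>z\<in>{z\<in>P. le x z \<and> le z y \<and> z \<noteq> y \<and> r z < r y}. mob r P le x z) else 0) else 0)"
  by auto
termination by (relation "measure (\<lambda>(r,P,le,x,y). r y)") auto

declare mob.simps[simp del]

lemma mobius_eq_mob:
  assumes rk: "\<And>x y. x \<in> P \<Longrightarrow> y \<in> P \<Longrightarrow> le x y \<Longrightarrow> x \<noteq> y \<Longrightarrow> r x < r y"
  shows "mobius P le = mob r P le"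
proof -
  have seteq: "\<And>x y. y \<in> P \<Longrightarrow> {z\<in>P. le x z \<and> le z y \<and> z \<noteq> y \<and> r z < r y} = {z\<in>P. le x z \<and> le z y \<and> z \<noteq> y}"
    using rk by auto
  show ?thesis
  unfolding mobius_def
proof (rule the_equality)
  show "(\<forall>x\<in>P. \<forall>y\<in>P. mob r P le x y =
        (if x = y then 1
         else if le x y then - (\<Sum>z \<in> {z \<in> P. le x z \<and> le z y \<and> z \<noteq> y}. mob r P le x z)
         else 0)) \<and>
     (\<forall>x y. x \<notin> P \<or> y \<notin> P \<longrightarrow> mob r P le x y = 0)"
    by (auto simp: mob.simps[of r P le] seteq)
next
  fix m :: "_ \<Rightarrow> _ \<Rightarrow> int"
  assume m: "(\<forall>x\<in>P. \<forall>y\<in>P. m x y =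
        (if x = y then 1
         else if le x y then - (\<Sum>z \<in> {z \<in> P. le x z \<and> le z y \<and> z \<noteq> y}. m x z)
         else 0)) \<and>
     (\<forall>x y. x \<notin> P \<or> y \<notin> P \<longrightarrow> m x y = 0)"
  have "\<forall>x. m x y = mob r P le x y" for y
  proof (induction "r y" arbitrary: y rule: less_induct)
    case less
    show ?case
    proof
      fix x
      show "m x y = mob r P le x y"
      proof (cases "x \<in> P \<and> y \<in> P")
        case True
        have "(\<Sum>z \<in> {z \<in> P. le x z \<and> le z y \<and> z \<noteq> y}. m x z) =
              (\<Sum>z \<in> {z \<in> P. le x z \<and> le z y \<and> z \<noteq> y}. mob r P le x z)"
          apply (rule sum.cong, simp)
          using less True rk by auto
        then show ?thesis using m True by (simp add: mob.simps[of r P le x y] seteq)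
      next
        case False
        then show ?thesis using m by (auto simp: mob.simps[of r P le x y])
      qed
    qed
  qed
  then show "m = mob r P le" by auto
qed
qed

lemma mobius_spec:
  fixes r :: "'a \<Rightarrow> nat"
  assumes rk: "\<And>x y. x \<in> P \<Longrightarrow> y \<in> P \<Longrightarrow> le x y \<Longrightarrow> x \<noteq> y \<Longrightarrow> r x < r y"
    and xy: "x \<in> P" "y \<in> P"
  shows "mobius P le x y = (if x = y then 1
         else if le x y then - (\<Sum>z \<in> {z \<in> P. le x z \<and> le z y \<and> z \<noteq> y}. mobius P le x z)
         else 0)"
proof -
  have seteq: "{z\<in>P. le x z \<and> le z y \<and> z \<noteq> y \<and> r z < r y} = {z\<in>P. le x z \<and> le z y \<and> z \<noteq> y}"
    using rk xy by auto
  have e: "mobius P le = mob r P le" by (rule mobius_eq_mob) (rule rk)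
  show ?thesis using xy
    by (simp add: e mob.simps[of r P le x y] seteq)
qed



definition Pn :: "nat \<Rightarrow> (nat \<times> nat) set" where
  "Pn n = {(i, Suc i) | i. i < n}"

lemma conn_sym:
  assumes "(x, y) \<in> (F \<union> F\<inverse>)\<^sup>*" shows "(y, x) \<in> (F \<union> F\<inverse>)\<^sup>*"
proof -
  have "sym (F \<union> F\<inverse>)" by (auto simp: sym_def)
  then have "sym ((F \<union> F\<inverse>)\<^sup>*)" by (rule sym_rtrancl)
  then show ?thesis using assms by (auto simp: sym_def)
qed

lemma path_conn1:
  assumes G: "G \<subseteq> Pn n" and "(a, b) \<in> (G \<union> G\<inverse>)\<^sup>*"
  shows "\<forall>i. min a b \<le> i \<and> i < max a b \<longrightarrow> (i, Suc i) \<in> G"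
  using assms(2)
proof (induction rule: rtrancl_induct)
  case base
  then show ?case by auto
next
  case (step y z)
  from step.hyps(2) G obtain j where j: "(j, Suc j) \<in> G" "(y = j \<and> z = Suc j) \<or> (z = j \<and> y = Suc j)"
    by (auto simp: Pn_def)
  show ?case
  proof (intro allI impI)
    fix i assume i: "min a z \<le> i \<and> i < max a z"
    show "(i, Suc i) \<in> G"
    proof (cases "i = j")
      case True then show ?thesis using j by simp
    next
      case False
      then have "min a y \<le> i \<and> i < max a y" using i j by auto
      then show ?thesis using step.IH by blast
    qed
  qed
qed

lemma path_conn2:
  assumes "\<forall>i. a \<le> i \<and> i < b \<longrightarrow> (i, Suc i) \<in> G" "a \<le> b"
  shows "(a, b) \<in> (G \<union> G\<inverse>)\<^sup>*"
  using assms
proof (induction b)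
  case 0 then show ?case by auto
next
  case (Suc b)
  show ?case
  proof (cases "a = Suc b")
    case True then show ?thesis by auto
  next
    case False
    then have "(a, b) \<in> (G \<union> G\<inverse>)\<^sup>*" using Suc by auto
    moreover have "(b, Suc b) \<in> G \<union> G\<inverse>" using Suc False by auto
    ultimately show ?thesis by (rule rtrancl_into_rtrancl)
  qed
qed

lemma path_conn_iff:
  assumes G: "G \<subseteq> Pn n"
  shows "(a, b) \<in> (G \<union> G\<inverse>)\<^sup>* \<longleftrightarrow> (\<forall>i. min a b \<le> i \<and> i < max a b \<longrightarrow> (i, Suc i) \<in> G)"
proof
  assume "(a, b) \<in> (G \<union> G\<inverse>)\<^sup>*" then show "\<forall>i. min a b \<le> i \<and> i < max a b \<longrightarrow> (i, Suc i) \<in> G"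
    using path_conn1[OF G] by blast
next
  assume h: "\<forall>i. min a b \<le> i \<and> i < max a b \<longrightarrow> (i, Suc i) \<in> G"
  show "(a, b) \<in> (G \<union> G\<inverse>)\<^sup>*"
  proof (cases "a \<le> b")
    case True then show ?thesis using h path_conn2[of a b G] by auto
  next
    case False
    then have "(b, a) \<in> (G \<union> G\<inverse>)\<^sup>*" using h path_conn2[of b a G] by auto
    then show ?thesis by (rule conn_sym)
  qed
qed

lemma Pn_sub_forest:
  assumes G: "G \<subseteq> Pn n"
  shows "priority_forest n G"
  unfolding priority_forest_def
proof (intro conjI)
  show "G \<subseteq> vertices n \<times> vertices n" using G by (auto simp: Pn_def vertices_def)
  show "\<forall>(p, c)\<in>G. p < c" using G by (auto simp: Pn_def)
  show "\<forall>p p' c. (p, c) \<in> G \<and> (p', c) \<in> G \<longrightarrow> p = p'" using G by (auto simp: Pn_def)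
next
  show "\<forall>x\<in>vertices n. \<forall>y\<in>vertices n. comp n G x \<noteq> comp n G y \<longrightarrow>
        (\<forall>a \<in> comp n G x. \<forall>b \<in> comp n G y. a < b) \<or>
        (\<forall>a \<in> comp n G x. \<forall>b \<in> comp n G y. b < a)"
  proof (intro ballI impI)
  fix x y assume x: "x \<in> vertices n" and y: "y \<in> vertices n" and ne: "comp n G x \<noteq> comp n G y"
  have nc: "(x, y) \<notin> (G \<union> G\<inverse>)\<^sup>*"
  proof
    assume xy: "(x, y) \<in> (G \<union> G\<inverse>)\<^sup>*"
    have "comp n G x = comp n G y"
      unfolding comp_def using xy conn_sym[OF xy]
      by (auto intro: rtrancl_trans)
    with ne show False by simp
  qed
  then obtain k where k: "min x y \<le> k" "k < max x y" "(k, Suc k) \<notin> G"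
    using path_conn_iff[OF G, of x y] by blast
  have A: "\<And>a. a \<in> comp n G x \<Longrightarrow> (\<forall>i. min x a \<le> i \<and> i < max x a \<longrightarrow> (i, Suc i) \<in> G)"
    unfolding comp_def using path_conn_iff[OF G] by blast
  have B: "\<And>b. b \<in> comp n G y \<Longrightarrow> (\<forall>i. min y b \<le> i \<and> i < max y b \<longrightarrow> (i, Suc i) \<in> G)"
    unfolding comp_def using path_conn_iff[OF G] by blast
  show "(\<forall>a\<in>comp n G x. \<forall>b\<in>comp n G y. a < b) \<or> (\<forall>a\<in>comp n G x. \<forall>b\<in>comp n G y. b < a)"
  proof (cases "x < y")
    case True
    have "a < b" if "a \<in> comp n G x" "b \<in> comp n G y" for a b
    proof -
      have "a \<le> k"
      proof (rule ccontr)
        assume "\<not> a \<le> k"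
        then have "min x a \<le> k \<and> k < max x a" using k True by auto
        then show False using A[OF that(1)] k(3) by blast
      qed
      moreover have "k < b"
      proof (rule ccontr)
        assume "\<not> k < b"
        then have "min y b \<le> k \<and> k < max y b" using k True by auto
        then show False using B[OF that(2)] k(3) by blast
      qed
      ultimately show ?thesis by simp
    qed
    then show ?thesis by blast
  next
    case False
    have "b < a" if "a \<in> comp n G x" "b \<in> comp n G y" for a b
    proof -
      have "b \<le> k"
      proof (rule ccontr)
        assume "\<not> b \<le> k"
        then have "min y b \<le> k \<and> k < max y b" using k False by auto
        then show False using B[OF that(2)] k(3) by blast
      qed
      moreover have "k < a"
      proof (rule ccontr)
        assume "\<not> k < a"
        then have "min x a \<le> k \<and> k < max x a" using k False by auto
        then show False using A[OF that(1)] k(3) by blast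
      qed
      ultimately show ?thesis by simp
    qed
    then show ?thesis by blast
  qed
qed
qed



lemma root_reach:
  assumes up: "\<forall>p p' c. (p, c) \<in> F \<and> (p', c) \<in> F \<longrightarrow> p = p'"
    and nr: "\<not> (\<exists>q. (q, r) \<in> F)"
    and h: "(r, v) \<in> (F \<union> F\<inverse>)\<^sup>*"
  shows "(r, v) \<in> F\<^sup>*"
  using h
proof (induction rule: rtrancl_induct)
  case base then show ?case by simp
next
  case (step y z)
  show ?case
  proof (cases "(y, z) \<in> F")
    case True then show ?thesis using step.IH by (auto intro: rtrancl_into_rtrancl)
  next
    case False
    then have zy: "(z, y) \<in> F" using step.hyps(2) by auto
    from step.IH show ?thesis
    proof (cases rule: rtranclE)
      case base then show ?thesis using nr zy by auto
    next
      case (step y')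
      then have "y' = z" using up zy by blast
      then show ?thesis using step by simp
    qed
  qed
qed

lemma rtrancl_le:
  assumes inc: "\<forall>(p, c) \<in> F. p < c" and h: "(x, y) \<in> F\<^sup>*"
  shows "x \<le> (y::nat)"
  using h
proof (induction rule: rtrancl_induct)
  case base then show ?case by simp
next
  case (step y z) then show ?case using inc by fastforce
qed

lemma forest_has_short_edge:
  assumes pf: "priority_forest n F" and ne: "F \<noteq> {}"
  shows "\<exists>i < n. (i, Suc i) \<in> F"
proof -
  have sub: "F \<subseteq> vertices n \<times> vertices n" and inc: "\<forall>(p, c) \<in> F. p < c"
    and up: "\<forall>p p' c. (p, c) \<in> F \<and> (p', c) \<in> F \<longrightarrow> p = p'"
    and ord: "\<forall>x \<in> vertices n. \<forall>y \<in> vertices n. comp n F x \<noteq> comp n F y \<longrightarrow>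
        (\<forall>a \<in> comp n F x. \<forall>b \<in> comp n F y. a < b) \<or>
        (\<forall>a \<in> comp n F x. \<forall>b \<in> comp n F y. b < a)"
    using pf unfolding priority_forest_def by auto
  let ?R = "F \<union> F\<inverse>"
  from ne obtain p c where pc: "(p, c) \<in> F" by auto
  have pV: "p \<in> vertices n" and cV: "c \<in> vertices n" using pc sub by auto
  have plc: "p < c" using pc inc by auto
  define C where "C = comp n F p"
  have finC: "finite C" unfolding C_def comp_def vertices_def by auto
  have pC: "p \<in> C" using pV unfolding C_def comp_def by auto
  have cC: "c \<in> C" using cV pc unfolding C_def comp_def by auto
  define a where "a = Min C"
  have aC: "a \<in> C" using finC pC unfolding a_def by (auto intro: Min_in)
  have amin: "\<And>x. x \<in> C \<Longrightarrow> a \<le> x" using finC unfolding a_def by auto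
  have alc: "a < c" using amin[OF pC] plc by simp
  have saV: "Suc a \<in> vertices n" using alc cV unfolding vertices_def by auto
  have saC: "Suc a \<in> C"
  proof (rule ccontr)
    assume nC: "Suc a \<notin> C"
    have "Suc a \<in> comp n F (Suc a)" using saV unfolding comp_def by auto
    then have "comp n F p \<noteq> comp n F (Suc a)" using nC unfolding C_def by auto
    then have "(\<forall>x \<in> C. \<forall>y \<in> comp n F (Suc a). x < y) \<or> (\<forall>x \<in> C. \<forall>y \<in> comp n F (Suc a). y < x)"
      using ord pV saV unfolding C_def by blast
    then show False
    proof
      assume "\<forall>x \<in> C. \<forall>y \<in> comp n F (Suc a). x < y"
      then have "c < Suc a" using cC \<open>Suc a \<in> comp n F (Suc a)\<close> by blast
      then show False using alc by simp
    next
      assume "\<forall>x \<in> C. \<forall>y \<in> comp n F (Suc a). y < x"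
      then have "Suc a < a" using aC \<open>Suc a \<in> comp n F (Suc a)\<close> by blast
      then show False by simp
    qed
  qed
  have r1: "(p, Suc a) \<in> ?R\<^sup>*" using saC unfolding C_def comp_def by auto
  have r2: "(p, a) \<in> ?R\<^sup>*" using aC unfolding C_def comp_def by auto
  have r3: "(Suc a, a) \<in> ?R\<^sup>*" using conn_sym[OF r1] r2 by (rule rtrancl_trans)
  have "\<exists>q. (q, Suc a) \<in> F"
  proof (rule ccontr)
    assume "\<not> (\<exists>q. (q, Suc a) \<in> F)"
    then have "(Suc a, a) \<in> F\<^sup>*" using root_reach[OF up _ r3] by blast
    then have "Suc a \<le> a" using rtrancl_le[OF inc] by blast
    then show False by simp
  qed
  then obtain q where q: "(q, Suc a) \<in> F" by auto
  have qlt: "q < Suc a" using q inc by auto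
  have "(p, q) \<in> ?R\<^sup>*" using r1 q by (auto intro: rtrancl_into_rtrancl)
  moreover have "q \<in> vertices n" using q sub by auto
  ultimately have "q \<in> C" unfolding C_def comp_def by auto
  then have "q = a" using amin qlt by fastforce
  moreover have "a < n" using saV unfolding vertices_def by auto
  ultimately show ?thesis using q by auto
qed



lemma mem_L: "z \<in> priority_lattice n \<longleftrightarrow> z = None \<or> (\<exists>F. z = Some F \<and> priority_forest n F)"
  unfolding priority_lattice_def by auto

lemma forest_sub: "priority_forest n F \<Longrightarrow> F \<subseteq> vertices n \<times> vertices n"
  unfolding priority_forest_def by auto

lemma fin_L: "finite (priority_lattice n)"
proof -
  have "priority_lattice n \<subseteq> Some ` Pow (vertices n \<times> vertices n) \<union> {None}"
    using forest_sub unfolding priority_lattice_def by auto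
  moreover have "finite (Some ` Pow (vertices n \<times> vertices n) \<union> {None})"
    unfolding vertices_def by auto
  ultimately show ?thesis by (rule finite_subset)
qed

definition rk :: "nat \<Rightarrow> (nat \<times> nat) set option \<Rightarrow> nat" where
  "rk n z = (case z of None \<Rightarrow> Suc (card (vertices n \<times> vertices n)) | Some B \<Rightarrow> card B)"

lemma rank_ok:
  assumes "x \<in> priority_lattice n" "y \<in> priority_lattice n" "priority_le x y" "x \<noteq> y"
  shows "rk n x < rk n y"
proof -
  have fin: "finite (vertices n \<times> vertices n)" unfolding vertices_def by auto
  show ?thesis
  proof (cases y)
    case None
    then obtain A where "x = Some A" "priority_forest n A" using assms mem_L by auto
    then have "card A \<le> card (vertices n \<times> vertices n)" using forest_sub card_mono[OF fin] by auto
    then show ?thesis using None \<open>x = Some A\<close> by (simp add: rk_def)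
  next
    case (Some B)
    then obtain A where A: "x = Some A" "A \<subseteq> B" "priority_forest n B" using assms mem_L priority_le_def by auto
    have "finite B" using A(3) forest_sub fin finite_subset by metis
    then show ?thesis using A Some assms(4) psubset_card_mono by (auto simp: rk_def)
  qed
qed

lemma M_spec:
  assumes "x \<in> priority_lattice n" "y \<in> priority_lattice n"
  shows "mobius (priority_lattice n) priority_le x y = (if x = y then 1
         else if priority_le x y then - (\<Sum>z \<in> {z \<in> priority_lattice n. priority_le x z \<and> priority_le z y \<and> z \<noteq> y}. mobius (priority_lattice n) priority_le x z)
         else 0)"
  by (rule mobius_spec[OF rank_ok assms])

lemma zero_L: "Some {} \<in> priority_lattice n"
  using Pn_sub_forest[of "{}" n] mem_L by auto

lemma sum_interval_zero:
  assumes y: "y \<in> priority_lattice n" "y \<noteq> Some {}" "priority_le (Some {}) y"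
  shows "(\<Sum>z \<in> {z \<in> priority_lattice n. priority_le (Some {}) z \<and> priority_le z y}. mobius (priority_lattice n) priority_le (Some {}) z) = 0"
proof -
  let ?M = "mobius (priority_lattice n) priority_le (Some {})"
  let ?S = "{z \<in> priority_lattice n. priority_le (Some {}) z \<and> priority_le z y \<and> z \<noteq> y}"
  have le_refl: "priority_le y y" using y by (auto simp: priority_le_def)
  have eq: "{z \<in> priority_lattice n. priority_le (Some {}) z \<and> priority_le z y} = insert y ?S"
    using y le_refl by auto
  have "finite ?S" using fin_L by auto
  then have "(\<Sum>z \<in> insert y ?S. ?M z) = ?M y + (\<Sum>z \<in> ?S. ?M z)" by (simp add: sum.insert)
  also have "?M y = - (\<Sum>z \<in> ?S. ?M z)" using M_spec[OF zero_L y(1)] y by simp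
  finally show ?thesis using eq by simp
qed

lemma claimA:
  assumes "priority_forest n F" "\<not> F \<subseteq> Pn n"
  shows "mobius (priority_lattice n) priority_le (Some {}) (Some F) = 0"
  using assms
proof (induction "card F" arbitrary: F rule: less_induct)
  case less
  let ?M = "mobius (priority_lattice n) priority_le (Some {})"
  let ?L = "priority_lattice n"
  have finF: "finite F" using forest_sub[OF less.prems(1)] finite_subset unfolding vertices_def by blast
  have FL: "Some F \<in> ?L" using less.prems mem_L by auto
  have Fne: "F \<noteq> {}" using less.prems by auto
  define H where "H = F \<inter> Pn n"
  have Hne: "H \<noteq> {}" using forest_has_short_edge[OF less.prems(1) Fne] unfolding H_def Pn_def by auto
  have HL: "Some H \<in> ?L" using Pn_sub_forest[of H n] mem_L unfolding H_def by auto
  let ?S = "{z \<in> ?L. priority_le (Some {}) z \<and> priority_le z (Some F) \<and> z \<noteq> Some F}"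
  let ?T = "{z \<in> ?L. priority_le (Some {}) z \<and> priority_le z (Some H)}"
  have TS: "?T \<subseteq> ?S" using less.prems(2) unfolding H_def priority_le_def by auto
  have rest: "\<forall>z \<in> ?S - ?T. ?M z = 0"
  proof
    fix z assume z: "z \<in> ?S - ?T"
    then obtain G where G: "z = Some G" "G \<subseteq> F" "G \<noteq> F" "priority_forest n G"
      by (auto simp: priority_le_def mem_L)
    have "\<not> G \<subseteq> H" using z G by (auto simp: priority_le_def)
    then have "\<not> G \<subseteq> Pn n" using G unfolding H_def by auto
    moreover have "card G < card F" using G finF psubset_card_mono by auto
    ultimately show "?M z = 0" using less.hyps G by auto
  qed
  have "(\<Sum>z \<in> ?S. ?M z) = (\<Sum>z \<in> ?T. ?M z)"
    using sum.mono_neutral_right[OF _ TS rest] fin_L by auto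
  also have "\<dots> = 0"
    using sum_interval_zero[OF HL] Hne by (auto simp: priority_le_def)
  finally have "(\<Sum>z \<in> ?S. ?M z) = 0" .
  then show ?case using M_spec[OF zero_L FL] Fne by (auto simp: priority_le_def)
qed

theorem corollary5p12:
  fixes n :: nat
  assumes "n \<ge> 1"
  shows "mobius (priority_lattice n) priority_le (Some {}) None = 0"
proof -
  let ?M = "mobius (priority_lattice n) priority_le (Some {})"
  let ?L = "priority_lattice n"
  have NL: "None \<in> ?L" using mem_L by auto
  have PL: "Some (Pn n) \<in> ?L" using Pn_sub_forest[of "Pn n" n] mem_L by auto
  have "(0, Suc 0) \<in> Pn n" using assms unfolding Pn_def by auto
  then have Pne: "Pn n \<noteq> {}" by auto
  let ?S = "{z \<in> ?L. priority_le (Some {}) z \<and> priority_le z None \<and> z \<noteq> None}"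
  let ?T = "{z \<in> ?L. priority_le (Some {}) z \<and> priority_le z (Some (Pn n))}"
  have TS: "?T \<subseteq> ?S" unfolding priority_le_def by auto
  have rest: "\<forall>z \<in> ?S - ?T. ?M z = 0"
  proof
    fix z assume z: "z \<in> ?S - ?T"
    then obtain G where G: "z = Some G" "priority_forest n G"
      by (auto simp: priority_le_def mem_L)
    have "\<not> G \<subseteq> Pn n" using z G by (auto simp: priority_le_def)
    then show "?M z = 0" using claimA G by auto
  qed
  have "(\<Sum>z \<in> ?S. ?M z) = (\<Sum>z \<in> ?T. ?M z)"
    using sum.mono_neutral_right[OF _ TS rest] fin_L by auto
  also have "\<dots> = 0"
    using sum_interval_zero[OF PL] Pne by (auto simp: priority_le_def)
  finally have "(\<Sum>z \<in> ?S. ?M z) = 0" .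
  then show ?thesis using M_spec[OF zero_L NL] by (auto simp: priority_le_def)
qed

end
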